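(* Let $p_k\ge0$ ($k\ge1$) with $\sum_k p_k=1$ and $Q_1=\sum_k kp_k<\infty$, let $Q(z)=\sum_k p_kz^k$, and for $q\in(0,1)$ define $\kappa(q)>0$ by $$-\log\kappa(q)=\int_0^{1-q}\Big(\frac{Q_1}{1-Q(z)}-\frac{1}{1-z}\Big)\,dz.$$ Then $\kappa(q)\to0$ as $q\to0$ if and only if $\sum_{k=1}^\infty p_k\,k\log k=\infty$. *)

theory Defs
  imports "HOL-Analysis.Analysis"
begin

definition pgf :: "(nat \<Rightarrow> real) \<Rightarrow> real \<Rightarrow> real" where
  "pgf p z = (\<Sum>k. p k * z ^ k)"

definition mean1 :: "(nat \<Rightarrow> real) \<Rightarrow> real" where
  "mean1 p = (\<Sum>k. real k * p k)"

definition kappa :: "(nat \<Rightarrow> real) \<Rightarrow> real \<Rightarrow> real" where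
  "kappa p q = exp (- integral {0..1 - q}
      (\<lambda>z. mean1 p / (1 - pgf p z) - 1 / (1 - z)))"

end

theory Submission imports Defs begin

definition cc :: "nat \<Rightarrow> real \<Rightarrow> real" where "cc k z = (\<Sum>j<k. \<Sum>i<j. z^i)"
definition dd :: "nat \<Rightarrow> real \<Rightarrow> real" where "dd k x = (\<Sum>j<k. \<Sum>i<j. x^(Suc i) / real (Suc i))"

lemma dd_deriv: "((dd k) has_real_derivative cc k x) (at x within S)"
proof -
  have t: "\<And>i. ((\<lambda>x. x^(Suc i) / real (Suc i)) has_real_derivative x^i) (at x within S)"
    apply (rule derivative_eq_intros refl)+
    apply (case_tac i)
     apply (auto simp: field_simps simp del: of_nat_Suc)
    done
  show ?thesis unfolding dd_def cc_def
    by (intro DERIV_sum t)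
qed

lemma cc_nonneg: "0 \<le> z \<Longrightarrow> 0 \<le> cc k z"
  unfolding cc_def by (intro sum_nonneg) auto

lemma dd_mono1: "0 \<le> x \<Longrightarrow> x \<le> 1 \<Longrightarrow> dd k x \<le> dd k 1"
  unfolding dd_def by (intro sum_mono divide_right_mono) (auto intro: power_le_one mult_le_one)

lemma dd_one: "dd k 1 = real k * (harm k - 1)"
proof (induction k)
  case 0 then show ?case by (simp add: dd_def)
next
  case (Suc k)
  have "dd (Suc k) 1 = dd k 1 + harm k"
    by (simp add: dd_def harm_altdef field_simps)
  also have "\<dots> = real k * (harm k - 1) + harm k" using Suc by simp
  also have "\<dots> = real (Suc k) * (harm (Suc k) - 1)"
    by (simp add: harm_Suc field_simps)
  finally show ?case .
qed

lemma harm_upper: "k \<ge> 1 \<Longrightarrow> harm k - 1 \<le> ln (real k)"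
proof (induction k rule: dec_induct)
  case base then show ?case by (simp add: harm_def)
next
  case (step n)
  have n: "real n > 0" using step by simp
  have "ln (real n / real (Suc n)) \<le> real n / real (Suc n) - 1"
    using n by (intro ln_le_minus_one) auto
  also have "\<dots> = - inverse (real (Suc n))" by (simp add: field_simps)
  finally have "inverse (real (Suc n)) \<le> ln (real (Suc n)) - ln (real n)"
    using n by (simp add: ln_div)
  then show ?case using step by (simp add: harm_Suc)
qed

lemma harm_lower: "ln (real k) \<le> harm k"
proof (cases "k = 0")
  case False
  then have "ln (real k) \<le> ln (real k + 1)" by simp
  then show ?thesis using ln_le_harm[of k] by linarith
qed (simp add: harm_nonneg)

lemma dd_upper: "dd k 1 \<le> real k * ln (real k)"
  using harm_upper[of k] by (cases "k = 0") (auto simp: dd_one intro: mult_left_mono)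

lemma dd_lower: "real k * ln (real k) - real k \<le> dd k 1"
proof -
  have "real k * ln (real k) \<le> real k * harm k" using harm_lower[of k] by (intro mult_left_mono) auto
  then show ?thesis by (simp add: dd_one algebra_simps)
qed

lemma dd_nonneg: "0 \<le> x \<Longrightarrow> 0 \<le> dd k x"
  unfolding dd_def by (intro sum_nonneg) auto

lemma cc_identity: "real k - (\<Sum>j<k. z^j) = (1 - z) * cc k (z::real)"
proof -
  have "real k - (\<Sum>j<k. z^j) = (\<Sum>j<k. 1 - z^j)" by (simp add: sum_subtractf)
  also have "\<dots> = (\<Sum>j<k. (1 - z) * (\<Sum>i<j. z^i))" by (simp add: one_diff_power_eq)
  finally show ?thesis by (simp add: cc_def sum_distrib_left)
qed

lemma fN_integral:
  fixes p :: "nat \<Rightarrow> real"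
  assumes "0 \<le> x"
  shows "((\<lambda>z. \<Sum>k<N. p k * cc k z) has_integral (\<Sum>k<N. p k * dd k x)) {0..x}"
proof -
  have "((\<lambda>z. \<Sum>k<N. p k * cc k z) has_integral
          (\<lambda>x. \<Sum>k<N. p k * dd k x) x - (\<lambda>x. \<Sum>k<N. p k * dd k x) 0) {0..x}"
  proof (rule fundamental_theorem_of_calculus[OF assms])
    fix z assume "z \<in> {0..x}"
    show "((\<lambda>x. \<Sum>k<N. p k * dd k x) has_vector_derivative (\<Sum>k<N. p k * cc k z)) (at z within {0..x})"
      unfolding has_real_derivative_iff_has_vector_derivative[symmetric]
      by (intro DERIV_sum DERIV_cmult dd_deriv)
  qed
  moreover have "dd k 0 = 0" for k by (simp add: dd_def)
  ultimately show ?thesis by simp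
qed

definition gg :: "(nat \<Rightarrow> real) \<Rightarrow> real \<Rightarrow> real" where
  "gg p z = (1 - pgf p z) / (1 - z)"
definition hh :: "(nat \<Rightarrow> real) \<Rightarrow> real \<Rightarrow> real" where
  "hh p z = (mean1 p - gg p z) / (1 - z)"

context
  fixes p :: "nat \<Rightarrow> real"
  assumes p0: "p 0 = 0"
    and nonneg: "\<And>k. p k \<ge> 0"
    and sum1: "p sums 1"
    and finite_mean: "summable (\<lambda>k. real k * p k)"
begin

lemma mean_sums: "(\<lambda>k. real k * p k) sums mean1 p"
  unfolding mean1_def using finite_mean summable_sums by blast

lemma pgf_sums:
  assumes "0 \<le> z" "z \<le> 1"
  shows "(\<lambda>k. p k * z^k) sums pgf p z"
proof -
  have "summable (\<lambda>k. p k * z^k)"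
  proof (rule summable_comparison_test)
    show "\<exists>N. \<forall>n\<ge>N. norm (p n * z ^ n) \<le> p n"
    proof (intro exI allI impI)
      fix n :: nat
      have "z^n \<le> 1" using assms by (simp add: power_le_one)
      then have "p n * z^n \<le> p n" using nonneg[of n] by (simp add: mult_left_le)
      moreover have "0 \<le> p n * z^n" using nonneg[of n] assms by simp
      ultimately show "norm (p n * z ^ n) \<le> p n" by simp
    qed
    show "summable p" using sum1 sums_summable by blast
  qed
  then show ?thesis unfolding pgf_def using summable_sums by blast
qed

lemma g_sums:
  assumes "0 \<le> z" "z < 1"
  shows "(\<lambda>k. p k * (\<Sum>j<k. z^j)) sums gg p z"
proof -
  have "(\<lambda>k. p k - p k * z^k) sums (1 - pgf p z)"
    using sums_diff[OF sum1 pgf_sums] assms by simp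
  moreover have "p k - p k * z^k = (1 - z) * (p k * (\<Sum>j<k. z^j))" for k
  proof -
    have "p k - p k * z^k = p k * (1 - z^k)" by (simp add: algebra_simps)
    also have "\<dots> = p k * ((1 - z) * (\<Sum>j<k. z^j))" by (simp only: one_diff_power_eq)
    finally show ?thesis by simp
  qed
  ultimately have "(\<lambda>k. (1 - z) * (p k * (\<Sum>j<k. z^j))) sums (1 - pgf p z)" by simp
  from sums_mult[OF this, of "1 / (1 - z)"] assms show ?thesis
    by (simp add: gg_def)
qed

lemma g_bounds:
  assumes "0 \<le> z" "z < 1"
  shows "1 \<le> gg p z" "gg p z \<le> mean1 p"
proof -
  show "1 \<le> gg p z"
  proof (rule sums_le[OF _ sum1 g_sums[OF assms]])
    fix k
    show "p k \<le> p k * (\<Sum>j<k. z^j)"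
    proof (cases k)
      case 0 then show ?thesis using p0 by simp
    next
      case (Suc m)
      have "1 \<le> (\<Sum>j<k. z^j)"
        using member_le_sum[of 0 "{..<k}" "\<lambda>j. z^j"] Suc assms by auto
      then show ?thesis using nonneg[of k] by (metis mult.right_neutral mult_left_mono)
    qed
  qed
  show "gg p z \<le> mean1 p"
  proof (rule sums_le[OF _ g_sums[OF assms] mean_sums])
    fix k
    have s: "(\<Sum>j<k. z^j) \<le> (\<Sum>j<k. 1)"
      using assms by (intro sum_mono power_le_one) auto
    show "p k * (\<Sum>j<k. z^j) \<le> real k * p k"
      using mult_left_mono[OF s nonneg[of k]] by (simp add: mult.commute)
  qed
qed

lemma h_sums:
  assumes "0 \<le> z" "z < 1"
  shows "(\<lambda>k. p k * cc k z) sums hh p z"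
proof -
  have "(\<lambda>k. real k * p k - p k * (\<Sum>j<k. z^j)) sums (mean1 p - gg p z)"
    using sums_diff[OF mean_sums g_sums[OF assms]] by simp
  moreover have "real k * p k - p k * (\<Sum>j<k. z^j) = (1 - z) * (p k * cc k z)" for k
  proof -
    have "real k * p k - p k * (\<Sum>j<k. z^j) = p k * (real k - (\<Sum>j<k. z^j))"
      by (simp add: algebra_simps)
    also have "\<dots> = p k * ((1 - z) * cc k z)" by (simp only: cc_identity)
    finally show ?thesis by simp
  qed
  ultimately have "(\<lambda>k. (1 - z) * (p k * cc k z)) sums (mean1 p - gg p z)" by simp
  from sums_mult[OF this, of "1 / (1 - z)"] assms show ?thesis
    by (simp add: hh_def)
qed

lemma f_eq:
  assumes "0 \<le> z" "z < 1"
  shows "mean1 p / (1 - pgf p z) - 1 / (1 - z) = hh p z / gg p z"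
proof -
  have g1: "gg p z \<ge> 1" using g_bounds[OF assms] by simp
  have e: "1 - pgf p z = (1 - z) * gg p z" using assms by (simp add: gg_def)
  have z: "1 - z \<noteq> 0" using assms by simp
  have g0: "gg p z \<noteq> 0" using g1 by simp
  have "mean1 p / ((1 - z) * gg p z) - 1 / (1 - z) = mean1 p / ((1 - z) * gg p z) - gg p z / ((1 - z) * gg p z)"
    using g0 by simp
  also have "\<dots> = (mean1 p - gg p z) / ((1 - z) * gg p z)" by (simp add: diff_divide_distrib)
  also have "\<dots> = hh p z / gg p z" by (simp add: hh_def)
  finally show ?thesis unfolding e .
qed

lemma f_bounds:
  assumes "0 \<le> z" "z < 1"
  shows "(\<Sum>k<N. p k * cc k z) / mean1 p \<le> mean1 p / (1 - pgf p z) - 1 / (1 - z)"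
    and "mean1 p / (1 - pgf p z) - 1 / (1 - z) \<le> hh p z"
    and "(\<Sum>k<N. p k * cc k z) \<le> hh p z"
proof -
  have g: "1 \<le> gg p z" "gg p z \<le> mean1 p" using g_bounds[OF assms] by auto
  have nn: "\<And>k. 0 \<le> p k * cc k z" using nonneg cc_nonneg assms by simp
  have part: "\<And>N. (\<Sum>k<N. p k * cc k z) \<le> hh p z"
    using sum_le_suminf[OF sums_summable[OF h_sums[OF assms]]] nn
      sums_unique[OF h_sums[OF assms]] by simp
  have h0: "0 \<le> hh p z" using part[of 0] by simp
  show "(\<Sum>k<N. p k * cc k z) \<le> hh p z" by (rule part)
  have "(\<Sum>k<N. p k * cc k z) / mean1 p \<le> hh p z / mean1 p"
    using part g by (intro divide_right_mono) auto
  also have "\<dots> \<le> hh p z / gg p z" using g h0 by (intro divide_left_mono) auto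
  finally show "(\<Sum>k<N. p k * cc k z) / mean1 p \<le> mean1 p / (1 - pgf p z) - 1 / (1 - z)"
    using f_eq[OF assms] by simp
  have "hh p z * 1 \<le> hh p z * gg p z" using g h0 by (intro mult_left_mono) auto
  then have "hh p z / gg p z \<le> hh p z" using g by (subst divide_le_eq) auto
  then show "mean1 p / (1 - pgf p z) - 1 / (1 - z) \<le> hh p z" using f_eq[OF assms] by simp
qed

lemma pgf_lt1:
  assumes "0 \<le> z" "z < 1"
  shows "pgf p z < 1"
proof -
  have "1 - pgf p z = (1 - z) * gg p z" using assms by (simp add: gg_def)
  moreover have "0 < (1 - z) * gg p z" using g_bounds[OF assms] assms by simp
  ultimately show ?thesis by simp
qed

lemma f_cont:
  assumes "0 < q"
  shows "continuous_on {0..1-q} (\<lambda>z. mean1 p / (1 - pgf p z) - 1 / (1 - z))"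
proof (rule continuous_at_imp_continuous_on, intro ballI)
  fix z assume z: "z \<in> {0..1-q}"
  have pc: "isCont (pgf p) z"
  proof -
    have "isCont (\<lambda>x. \<Sum>n. p n * x^n) z"
      by (rule isCont_powser[where K=1]) (use sum1 sums_summable z assms in auto)
    then show ?thesis by (simp add: pgf_def[abs_def])
  qed
  have "pgf p z < 1" using pgf_lt1 z assms by auto
  then show "isCont (\<lambda>z. mean1 p / (1 - pgf p z) - 1 / (1 - z)) z"
    using z assms by (auto intro!: continuous_intros pc)
qed

end

theorem lemma3p7:
  fixes p :: "nat \<Rightarrow> real"
  assumes p0: "p 0 = 0"
    and nonneg: "\<And>k. p k \<ge> 0"
    and sum1: "p sums 1"
    and finite_mean: "summable (\<lambda>k. real k * p k)"
  shows "((kappa p) \<longlongrightarrow> 0) (at_right 0) \<longleftrightarrow>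
         \<not> summable (\<lambda>k. p k * real k * ln (real k))"
proof -
  note A = p0 nonneg sum1 finite_mean
  define f where "f = (\<lambda>z. mean1 p / (1 - pgf p z) - 1 / (1 - z))"
  define F where "F q = integral {0..1-q} f" for q
  have kap: "kappa p q = exp (- F q)" for q by (simp add: kappa_def F_def f_def)
  have Q1: "1 \<le> mean1 p" using g_bounds[OF A, of 0] by simp
  have fint: "f integrable_on {0..1-q}" if "0 < q" for q
    unfolding f_def by (rule integrable_continuous_interval) (rule f_cont[OF A that])
  have lowF: "(\<Sum>k<N. p k * dd k (1-q)) / mean1 p \<le> F q" if "0 < q" "q \<le> 1" for q N
  proof -
    have "((\<lambda>z. (\<Sum>k<N. p k * cc k z) / mean1 p) has_integral (\<Sum>k<N. p k * dd k (1-q)) / mean1 p) {0..1-q}"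
      using fN_integral[of "1-q" p N] that by (intro has_integral_divide) auto
    moreover have "(f has_integral F q) {0..1-q}"
      unfolding F_def using fint[OF that(1)] by (rule integrable_integral)
    ultimately show ?thesis
      by (rule has_integral_le) (use f_bounds(1)[OF A] that in \<open>auto simp: f_def\<close>)
  qed
  show ?thesis
  proof
    assume lim: "((kappa p) \<longlongrightarrow> 0) (at_right 0)"
    show "\<not> summable (\<lambda>k. p k * real k * ln (real k))"
    proof
      assume sm: "summable (\<lambda>k. p k * real k * ln (real k))"
      have ddnn: "0 \<le> p k * dd k 1" for k using nonneg[of k] dd_nonneg[of 1 k] by simp
      have sdd: "summable (\<lambda>k. p k * dd k 1)"
      proof (rule summable_comparison_test[OF _ sm], intro exI allI impI)
        fix n
        have "p n * dd n 1 \<le> p n * (real n * ln (real n))"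
          using dd_upper[of n] nonneg[of n] by (intro mult_left_mono) auto
        then show "norm (p n * dd n 1) \<le> p n * real n * ln (real n)"
          using ddnn[of n] by (simp add: mult.assoc)
      qed
      define B where "B = (\<Sum>k. p k * dd k 1)"
      have FB: "F q \<le> B" if q: "0 < q" "q < 1" for q
      proof -
        define S where "S = {0..1-q}"
        define fN where "fN N z = (\<Sum>k<N. p k * cc k z)" for N z
        have fNi: "(fN N has_integral (\<Sum>k<N. p k * dd k (1-q))) S" for N
          unfolding fN_def S_def using fN_integral[of "1-q" p N] q by simp
        have iB: "integral S (fN N) \<le> B" for N
        proof -
          have "integral S (fN N) = (\<Sum>k<N. p k * dd k (1-q))" using fNi by (rule integral_unique)
          also have "\<dots> \<le> (\<Sum>k<N. p k * dd k 1)"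
            using q nonneg by (intro sum_mono mult_left_mono dd_mono1) auto
          also have "\<dots> \<le> B" unfolding B_def
            using sum_le_suminf[OF sdd] ddnn by simp
          finally show ?thesis .
        qed
        have i0: "0 \<le> integral S (fN N)" for N
        proof -
          have "integral S (fN N) = (\<Sum>k<N. p k * dd k (1-q))" using fNi by (rule integral_unique)
          also have "0 \<le> \<dots>" using q nonneg by (intro sum_nonneg mult_nonneg_nonneg dd_nonneg) auto
          finally show ?thesis by simp
        qed
        have mc: "hh p integrable_on S \<and> ((\<lambda>N. integral S (fN N)) \<longlonglongrightarrow> integral S (hh p))"
        proof (rule monotone_convergence_increasing)
          show "fN N integrable_on S" for N using fNi by blast
          show "fN N z \<le> fN (Suc N) z" if "z \<in> S" for N z
            using that q nonneg[of N] cc_nonneg[of z N] by (simp add: fN_def S_def)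
          show "(\<lambda>N. fN N z) \<longlonglongrightarrow> hh p z" if "z \<in> S" for z
            using h_sums[OF A, of z] that q unfolding fN_def S_def sums_def by auto
          show "bounded (range (\<lambda>N. integral S (fN N)))"
          proof -
            have "\<bar>integral S (fN N)\<bar> \<le> B" for N using iB[of N] i0[of N] by simp
            then show ?thesis unfolding bounded_real by auto
          qed
        qed
        have hB: "integral S (hh p) \<le> B"
          using mc iB by (intro LIMSEQ_le_const2) auto
        have "F q \<le> integral S (hh p)"
          unfolding F_def S_def
          by (rule integral_le) (use fint[OF q(1)] mc f_bounds(2)[OF A] q in \<open>auto simp: f_def S_def\<close>)
        with hB show ?thesis by simp
      qed
      have ev1: "eventually (\<lambda>q. kappa p q < exp (- B)) (at_right 0)"
        using order_tendstoD(2)[OF lim] by simp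
      have ev2: "eventually (\<lambda>q. q \<in> {0<..<1}) (at_right (0::real))"
        by (rule eventually_at_right_real) simp
      have "eventually (\<lambda>q. False) (at_right (0::real))"
      proof (rule eventually_mono[OF eventually_conj[OF ev1 ev2]])
        fix q assume "kappa p q < exp (- B) \<and> q \<in> {0<..<1}"
        then have "exp (- F q) < exp (- B)" "F q \<le> B" using FB kap by auto
        then show False by simp
      qed
      then show False by (simp add: trivial_limit_def[symmetric])
    qed
  next
    assume ns: "\<not> summable (\<lambda>k. p k * real k * ln (real k))"
    have nsd: "\<not> summable (\<lambda>k. p k * dd k 1)"
    proof
      assume s: "summable (\<lambda>k. p k * dd k 1)"
      have "summable (\<lambda>k. p k * dd k 1 + real k * p k)"
        using summable_add[OF s finite_mean] .
      then have "summable (\<lambda>k. p k * real k * ln (real k))"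
      proof (rule summable_comparison_test[rotated], intro exI allI impI)
        fix n
        have "p n * (real n * ln (real n) - real n) \<le> p n * dd n 1"
          using dd_lower[of n] nonneg[of n] by (intro mult_left_mono) auto
        moreover have "0 \<le> p n * real n * ln (real n)"
          using nonneg[of n] by (cases "n = 0") auto
        ultimately show "norm (p n * real n * ln (real n)) \<le> p n * dd n 1 + real n * p n"
          by (simp add: algebra_simps)
      qed
      with ns show False by simp
    qed
    have unb: "\<exists>N. M < (\<Sum>k<N. p k * dd k 1)" for M
    proof (rule ccontr)
      assume "\<not> ?thesis"
      then have "(\<Sum>k\<le>n. p k * dd k 1) \<le> M" for n
        by (metis lessThan_Suc_atMost not_less)
      then have "summable (\<lambda>k. p k * dd k 1)"
        using nonneg dd_nonneg[of 1] by (intro bounded_imp_summable) auto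
      with nsd show False by simp
    qed
    show "((kappa p) \<longlongrightarrow> 0) (at_right 0)"
    proof (rule order_tendstoI)
      fix a :: real assume "a < 0"
      then show "eventually (\<lambda>q. a < kappa p q) (at_right 0)"
        by (intro always_eventually allI) (metis kap exp_gt_zero less_trans)
    next
      fix e :: real assume e: "0 < e"
      obtain N where N: "mean1 p * (- ln e) < (\<Sum>k<N. p k * dd k 1)" using unb by blast
      have "((\<lambda>q. \<Sum>k<N. p k * dd k (1 - q)) \<longlongrightarrow> (\<Sum>k<N. p k * dd k (1 - 0))) (at_right 0)"
        unfolding dd_def by (intro tendsto_intros) auto
      then have "eventually (\<lambda>q. mean1 p * (- ln e) < (\<Sum>k<N. p k * dd k (1 - q))) (at_right 0)"
        using N by (intro order_tendstoD(1)) auto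
      moreover have "eventually (\<lambda>q. q \<in> {0<..<1}) (at_right (0::real))"
        by (rule eventually_at_right_real) simp
      ultimately show "eventually (\<lambda>q. kappa p q < e) (at_right 0)"
      proof eventually_elim
        case (elim q)
        have "- ln e < (\<Sum>k<N. p k * dd k (1 - q)) / mean1 p"
          using elim(1) Q1 by (simp add: pos_less_divide_eq mult.commute)
        also have "\<dots> \<le> F q" using lowF[of q N] elim(2) by auto
        finally have "exp (- F q) < exp (ln e)" by simp
        then show ?case using e by (simp add: kap)
      qed
    qed
  qed
qed

end
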